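(* Let $P_X$, $P_{Y|X}$ and $Q_Y$ be such that $P_{Y|X}(\cdot|x)\ll Q_Y$ for $P_X$-almost all $x$, let $(X,Y)\sim P_XP_{Y|X}$, and let $J\in\mathbb{Z}_{>0}$ have conditional distribution $J\,|\,\{X=x,Y=y\}\sim \mathrm{Geom}\big((\tfrac{\mathrm{d}P_{Y|X}(\cdot|x)}{\mathrm{d}Q_Y}(y)+1)^{-1}\big)$. Then $$\mathbb{E}[\log J]\le \mathbb{E}\big[D_{\mathrm{KL}}(P_{Y|X}(\cdot|X)\Vert Q_Y)\big]+1.$$
   Context: $\mathrm{Geom}(p)$ denotes the geometric distribution on $\{1,2,\ldots\}$ with $\mathbb{P}(J=k)=(1-p)^{k-1}p$. Logarithms are base 2; $D_{\mathrm{KL}}$ is in bits. *)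

theory Defs
  imports "HOL-Probability.Probability"
begin

text \<open>Geom(p) on {1,2,...}: P(J = k) = (1-p)^(k-1) p (meaningful for 0 < p <= 1).\<close>
definition geom_pos :: "real \<Rightarrow> nat pmf" where
  "geom_pos p = map_pmf Suc (geometric_pmf p)"

text \<open>KL divergence D(P || Q) in bits, as an extended real:
  the integral of log_2 (dP/dQ) with respect to P, split into positive and
  negative parts (so that the value +infinity is allowed).\<close>
definition KL_bits :: "'b measure \<Rightarrow> 'b measure \<Rightarrow> ereal" where
  "KL_bits Q P =
     enn2ereal (\<integral>\<^sup>+ y. ennreal (entropy_density 2 Q P y) \<partial>P)
   - enn2ereal (\<integral>\<^sup>+ y. ennreal (- entropy_density 2 Q P y) \<partial>P)"

end

theory Submission
  imports Defs
begin


lemma ereal_inf_minus: "(\<infinity>::ereal) - \<infinity> = \<infinity>" by simp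

lemma ln2_ge_unused: "ln (2::real) \<ge> 1/2"
proof -
  have "ln (1/2::real) \<le> 1/2 - 1" by (rule ln_le_minus_one) auto
  thus ?thesis by (simp add: ln_div)
qed

lemma log_tangent:
  fixes j m :: real assumes "j > 0" "m > 0"
  shows "log 2 j \<le> log 2 m + (j/m - 1) / ln 2"
proof -
  have "ln (j/m) \<le> j/m - 1" by (rule ln_le_minus_one) (use assms in auto)
  hence "ln j - ln m \<le> j/m - 1" using assms by (simp add: ln_div)
  thus ?thesis unfolding log_def using ln_gt_zero[of 2]
    by (simp add: divide_right_mono diff_divide_distrib[symmetric] field_simps)
qed

lemma geom_step:
  fixes r :: real assumes "r \<ge> 0"
  shows "(\<integral>\<^sup>+ j. ennreal (log 2 (real j)) \<partial>measure_pmf (geom_pos (1 / (r + 1))))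
         \<le> ennreal (log 2 (r + 1))"
proof -
  define p where "p = 1 / (r + 1)"
  define m where "m = r + 1"
  define c where "c = 1 / ln (2::real)"
  have c0: "c > 0" unfolding c_def by simp
  have p: "p \<in> {0<..1}" using assms by (auto simp: p_def)
  have m: "m \<ge> 1" using assms by (simp add: m_def)
  have pm: "p = 1 / m" by (simp add: p_def m_def)
  have E: "(\<integral>\<^sup>+ n. ennreal (real (Suc n)) \<partial>measure_pmf (geometric_pmf p)) = ennreal m"
  proof -
    have "(\<integral>\<^sup>+ n. ennreal (real n) \<partial>measure_pmf (geometric_pmf p)) = ennreal ((1-p)/p)"
      using expectation_geometric_pmf[OF p] integrable_real_geometric_pmf[OF p]
      by (subst nn_integral_eq_integral) auto
    moreover have "(\<integral>\<^sup>+ n. ennreal (real (Suc n)) \<partial>measure_pmf (geometric_pmf p)) =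
       (\<integral>\<^sup>+ n. ennreal (real n) \<partial>measure_pmf (geometric_pmf p)) + (\<integral>\<^sup>+ n. 1 \<partial>measure_pmf (geometric_pmf p))"
    proof -
      have "(\<lambda>n. ennreal (real (Suc n))) = (\<lambda>n. ennreal (real n) + 1)"
        by (simp only: ennreal_of_nat_eq_real_of_nat[symmetric]) (simp add: add.commute)
      thus ?thesis by (simp add: nn_integral_add)
    qed
    ultimately have "(\<integral>\<^sup>+ n. ennreal (real (Suc n)) \<partial>measure_pmf (geometric_pmf p)) = ennreal ((1-p)/p) + 1"
      by simp
    also have "\<dots> = ennreal m" using p m
      by (subst ennreal_plus[symmetric, where b=1, simplified]) (auto simp: pm field_simps)
    finally show ?thesis .
  qed
  have pw: "ennreal (log 2 (real (Suc n))) + ennreal c \<le> ennreal (log 2 m) + ennreal (c/m) * ennreal (real (Suc n))" for n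
  proof -
    have "log 2 (real (Suc n)) \<le> log 2 m + (real (Suc n)/m - 1) / ln 2"
      using log_tangent[of "real (Suc n)" m] m by auto
    moreover have "(real (Suc n)/m - 1) / ln 2 = c/m * real (Suc n) - c"
      using m by (simp add: c_def diff_divide_distrib)
    ultimately have "log 2 (real (Suc n)) + c \<le> log 2 m + c/m * real (Suc n)"
      by linarith
    moreover have "log 2 (real (Suc n)) \<ge> 0" "log 2 m \<ge> 0" using m by auto
    ultimately show ?thesis using c0 m
      by (simp add: ennreal_plus[symmetric] ennreal_mult[symmetric] del: ennreal_plus)
  qed
  have "(\<integral>\<^sup>+ n. ennreal (log 2 (real (Suc n))) \<partial>measure_pmf (geometric_pmf p)) + ennreal c
      = (\<integral>\<^sup>+ n. ennreal (log 2 (real (Suc n))) + ennreal c \<partial>measure_pmf (geometric_pmf p))"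
    by (subst nn_integral_add) auto
  also have "\<dots> \<le> (\<integral>\<^sup>+ n. ennreal (log 2 m) + ennreal (c/m) * ennreal (real (Suc n)) \<partial>measure_pmf (geometric_pmf p))"
    by (rule nn_integral_mono) (rule pw)
  also have "\<dots> = ennreal (log 2 m) + ennreal (c/m) * ennreal m"
    by (subst nn_integral_add) (auto simp: nn_integral_cmult E[simplified])
  also have "\<dots> = ennreal (log 2 m) + ennreal c"
    using m c0 by (subst ennreal_mult[symmetric]) auto
  finally have "(\<integral>\<^sup>+ n. ennreal (log 2 (real (Suc n))) \<partial>measure_pmf (geometric_pmf p)) \<le> ennreal (log 2 m)"
    by (subst (asm) add.commute, subst (asm) (2) add.commute, subst (asm) ennreal_add_left_cancel_le) simp
  thus ?thesis by (simp add: geom_pos_def p_def m_def)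
qed


lemma ln2_ge: "ln (2::real) \<ge> 1/2"
proof -
  have "ln (1/2::real) \<le> 1/2 - 1" by (rule ln_le_minus_one) auto
  thus ?thesis by (simp add: ln_div)
qed

lemma fin1: "(I::ennreal) + N \<le> P + 1 \<Longrightarrow> N \<noteq> \<infinity> \<Longrightarrow> I \<le> (P - N) + 1"
  by (metis add.commute add_diff_le_ennreal ennreal_le_minus_iff order_trans_rules(23))

lemma fin_KL: "(I::ennreal) + N \<le> P + 1 \<Longrightarrow> I \<le> e2ennreal (enn2ereal P - enn2ereal N) + 1"
proof (cases "N = \<infinity>")
  case True
  assume h: "I + N \<le> P + 1"
  then have "P = \<infinity>" using True by (auto simp: top_unique)
  then show ?thesis using True by simp
next
  case False
  assume h: "I + N \<le> P + 1"
  then show ?thesis using False fin1 by simp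
qed

lemma real_pw:
  fixes r :: real assumes "r > 0"
  shows "log 2 (r + 1) - log 2 r \<le> 1 + (1/(2 * ln 2)) * (1/r) - 1/(2 * ln 2)"
proof -
  define t where "t = 1/r"
  have t: "t > 0" using assms by (simp add: t_def)
  have "ln ((1+t)/2) \<le> (1+t)/2 - 1" by (rule ln_le_minus_one) (use t in auto)
  hence "ln (1+t) \<le> ln 2 + (t - 1)/2" using t by (simp add: ln_div field_simps)
  hence "ln (1+t) / ln 2 \<le> 1 + (t-1)/(2 * ln 2)"
    by (simp add: divide_right_mono add_divide_distrib[symmetric] field_simps)
  moreover have "log 2 (r + 1) - log 2 r = ln (1+t) / ln 2"
  proof -
    have "1 + t = (r+1)/r" using assms by (simp add: t_def field_simps)
    hence "ln (1+t) = ln (r+1) - ln r" using assms by (simp add: ln_div)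
    thus ?thesis by (simp add: log_def diff_divide_distrib)
  qed
  moreover have "(t-1)/(2 * ln 2) = (1/(2 * ln 2)) * (1/r) - 1/(2 * ln 2)"
    by (simp add: t_def field_simps)
  ultimately show ?thesis by linarith
qed

lemma enn_pw:
  fixes r :: real assumes "r \<ge> 0"
  defines "c \<equiv> 1/(2 * ln (2::real))"
  shows "ennreal (log 2 (r + 1)) + ennreal (- log 2 r) + ennreal c
     \<le> ennreal (log 2 r) + 1 + ennreal c * ennreal (1/r)"
proof (cases "r = 0")
  case True
  have "c \<le> 1" unfolding c_def using ln2_ge by (simp add: field_simps)
  then show ?thesis using True by (simp add: log_def)
next
  case False
  hence r: "r > 0" using assms by simp
  have c: "c > 0" unfolding c_def by simp
  have a: "log 2 (r+1) \<ge> 0" using r by simp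
  have h: "log 2 (r + 1) - log 2 r \<le> 1 + c * (1/r) - c" using real_pw[OF r] by (simp add: c_def)
  show ?thesis
  proof (cases "log 2 r \<ge> 0")
    case True
    hence "log 2 (r + 1) + c \<le> log 2 r + 1 + c * (1/r)" using h by linarith
    moreover have "ennreal (- log 2 r) = 0" using True by (intro ennreal_neg) simp
    moreover have "ennreal (log 2 (r+1)) + ennreal c = ennreal (log 2 (r+1) + c)"
      using a c by (simp add: ennreal_plus)
    moreover have "ennreal (log 2 r) + 1 + ennreal c * ennreal (1/r) = ennreal (log 2 r + 1 + c * (1/r))"
      using True c r by (simp add: ennreal_plus ennreal_mult[symmetric])
    ultimately show ?thesis by (simp add: ennreal_leI)
  next
    case False
    hence "log 2 (r + 1) + (- log 2 r) + c \<le> 1 + c * (1/r)" using h by linarith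
    moreover have "ennreal (log 2 r) = 0" using False by (intro ennreal_neg) simp
    moreover have "ennreal (log 2 (r+1)) + ennreal (- log 2 r) + ennreal c = ennreal (log 2 (r+1) + (- log 2 r) + c)"
      using a c False by (subst ennreal_plus, simp, simp, subst ennreal_plus) auto
    moreover have "1 + ennreal c * ennreal (1/r) = ennreal (1 + c * (1/r))"
      using c r by (simp add: ennreal_plus ennreal_mult[symmetric])
    ultimately show ?thesis by (simp add: ennreal_leI)
  qed
qed

lemma kl_step:
  fixes Q Kx :: "'b measure"
  assumes Q: "prob_space Q" and sK: "sets Kx = sets Q" and PK: "prob_space Kx"
    and ac: "absolutely_continuous Q Kx"
  shows "(\<integral>\<^sup>+y. ennreal (log 2 (enn2real (RN_deriv Q Kx y) + 1)) \<partial>Kx) \<le> e2ennreal (KL_bits Q Kx) + 1"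
proof -
  interpret Q: prob_space Q by fact
  interpret K: prob_space Kx by fact
  define r where "r y = enn2real (RN_deriv Q Kx y)" for y
  define c where "c = 1/(2 * ln (2::real))"
  have rm[measurable]: "r \<in> borel_measurable Kx"
    unfolding r_def measurable_cong_sets[OF sK refl] by measurable
  define I where "I = (\<integral>\<^sup>+y. ennreal (log 2 (r y + 1)) \<partial>Kx)"
  define P where "P = (\<integral>\<^sup>+y. ennreal (entropy_density 2 Q Kx y) \<partial>Kx)"
  define N where "N = (\<integral>\<^sup>+y. ennreal (- entropy_density 2 Q Kx y) \<partial>Kx)"
  have ed: "entropy_density 2 Q Kx y = log 2 (r y)" for y by (simp add: entropy_density_def r_def)
  have T: "(\<integral>\<^sup>+y. ennreal (1 / r y) \<partial>Kx) \<le> 1"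
  proof -
    have "(\<integral>\<^sup>+y. ennreal (1 / r y) \<partial>Kx) = (\<integral>\<^sup>+y. RN_deriv Q Kx y * ennreal (1 / r y) \<partial>Q)"
      unfolding r_def by (rule Q.RN_deriv_nn_integral[OF ac sK]) measurable
    also have "\<dots> \<le> (\<integral>\<^sup>+y. 1 \<partial>Q)"
    proof (rule nn_integral_mono)
      fix y
      show "RN_deriv Q Kx y * ennreal (1 / r y) \<le> 1"
        unfolding r_def
        by (cases "RN_deriv Q Kx y") (auto simp: ennreal_mult[symmetric] ennreal_1[symmetric] simp del: ennreal_1)
    qed
    also have "\<dots> = 1" by (simp add: Q.emeasure_space_1)
    finally show ?thesis .
  qed
  have "I + N + ennreal c = (\<integral>\<^sup>+y. ennreal (log 2 (r y + 1)) + ennreal (- log 2 (r y)) + ennreal c \<partial>Kx)"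
    unfolding I_def N_def ed
    by (subst nn_integral_add, simp, simp, subst nn_integral_add, auto simp: K.emeasure_space_1)
  also have "\<dots> \<le> (\<integral>\<^sup>+y. ennreal (log 2 (r y)) + 1 + ennreal c * ennreal (1 / r y) \<partial>Kx)"
    by (rule nn_integral_mono) (unfold c_def, rule enn_pw, simp add: r_def)
  also have "\<dots> = P + 1 + ennreal c * (\<integral>\<^sup>+y. ennreal (1 / r y) \<partial>Kx)"
    unfolding P_def ed
    by (subst nn_integral_add, simp, simp, subst nn_integral_add, auto simp: nn_integral_cmult K.emeasure_space_1)
  also have "\<dots> \<le> P + 1 + ennreal c"
    using T by (intro add_left_mono) (metis mult.right_neutral mult_left_mono zero_le)
  finally have "I + N + ennreal c \<le> P + 1 + ennreal c" .
  hence "I + N \<le> P + 1"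
    by (subst (asm) add.commute, subst (asm) (2) add.commute, subst (asm) ennreal_add_left_cancel_le) simp
  hence "I \<le> e2ennreal (enn2ereal P - enn2ereal N) + 1" by (rule fin_KL)
  thus ?thesis unfolding KL_bits_def I_def P_def N_def r_def .
qed


lemma outer:
  assumes M: "prob_space M" and ae: "AE x in M. g x \<le> f x + 1"
  shows "(\<integral>\<^sup>+x. g x \<partial>M) \<le> (\<integral>\<^sup>+x. f x \<partial>M) + 1"
proof -
  interpret prob_space M by fact
  define g' where "g' x = min (g x) (f x + 1)" for x
  have "(\<integral>\<^sup>+x. g x \<partial>M) \<le> (\<integral>\<^sup>+x. g' x \<partial>M)"
    by (rule nn_integral_mono_AE) (use ae in \<open>auto simp: g'_def\<close>)
  also have "\<dots> \<le> (\<integral>\<^sup>+x. f x \<partial>M) + 1"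
    unfolding nn_integral_def[of M g']
  proof (rule SUP_least)
    fix s assume "s \<in> {s. simple_function M s \<and> s \<le> g'}"
    hence s: "simple_function M s" "\<And>x. s x \<le> f x + 1"
      by (auto simp: le_fun_def g'_def intro: order_trans)
    define s' where "s' x = s x - 1" for x
    have s'm: "simple_function M s'"
      unfolding s'_def using simple_function_compose[OF s(1), of "\<lambda>a. a - 1"] by (simp add: o_def)
    have s'f: "s' x \<le> f x" for x
      unfolding s'_def using s(2)[of x] by (simp add: ennreal_minus_le_iff add.commute)
    have ss': "s x \<le> s' x + 1" for x
      unfolding s'_def by (auto simp: diff_add_self_ennreal)
    have "integral\<^sup>S M s = (\<integral>\<^sup>+x. s x \<partial>M)"
      using s(1) by (simp add: nn_integral_eq_simple_integral)
    also have "\<dots> \<le> (\<integral>\<^sup>+x. s' x + 1 \<partial>M)"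
      by (rule nn_integral_mono) (rule ss')
    also have "\<dots> = (\<integral>\<^sup>+x. s' x \<partial>M) + 1"
      using s'm by (subst nn_integral_add) (auto simp: borel_measurable_simple_function emeasure_space_1)
    also have "\<dots> \<le> (\<integral>\<^sup>+x. f x \<partial>M) + 1"
      by (intro add_right_mono nn_integral_mono s'f)
    finally show "integral\<^sup>S M s \<le> (\<integral>\<^sup>+x. f x \<partial>M) + 1" .
  qed
  finally show ?thesis .
qed

theorem mainTheorem3:
  fixes PX :: "'a measure" and K :: "'a \<Rightarrow> 'b measure" and Q :: "'b measure"
  assumes "prob_space PX"
    and "prob_space Q"
    and "K \<in> PX \<rightarrow>\<^sub>M prob_algebra Q"
    and "AE x in PX. absolutely_continuous Q (K x)"
  shows "(\<integral>\<^sup>+ x. \<integral>\<^sup>+ y. \<integral>\<^sup>+ j. ennreal (log 2 (real j))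
            \<partial>measure_pmf (geom_pos (1 / (enn2real (RN_deriv Q (K x) y) + 1))) \<partial>K x \<partial>PX)
         \<le> (\<integral>\<^sup>+ x. e2ennreal (KL_bits Q (K x)) \<partial>PX) + 1"
proof (rule outer[OF assms(1)])
  show "AE x in PX. (\<integral>\<^sup>+ y. \<integral>\<^sup>+ j. ennreal (log 2 (real j))
            \<partial>measure_pmf (geom_pos (1 / (enn2real (RN_deriv Q (K x) y) + 1))) \<partial>K x)
         \<le> e2ennreal (KL_bits Q (K x)) + 1"
    using assms(4) AE_space
  proof eventually_elim
    case (elim x)
    have "K x \<in> space (prob_algebra Q)" using measurable_space[OF assms(3) elim(2)] .
    hence sK: "sets (K x) = sets Q" and PK: "prob_space (K x)" by (auto simp: space_prob_algebra)
    have "(\<integral>\<^sup>+ y. \<integral>\<^sup>+ j. ennreal (log 2 (real j))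
            \<partial>measure_pmf (geom_pos (1 / (enn2real (RN_deriv Q (K x) y) + 1))) \<partial>K x)
          \<le> (\<integral>\<^sup>+y. ennreal (log 2 (enn2real (RN_deriv Q (K x) y) + 1)) \<partial>K x)"
      by (rule nn_integral_mono) (rule geom_step, simp)
    also have "\<dots> \<le> e2ennreal (KL_bits Q (K x)) + 1"
      by (rule kl_step[OF assms(2) sK PK elim(1)])
    finally show ?case .
  qed
qed

end
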